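(* Let $A$ be an $n\times n$ dilation matrix and let $\mu$ be the smallest singular value of $A$. If $\mu>2\sqrt n$, then $A$ yields a radix representation of $\mathbb{Z}^n$ with digit set $D=A(F)\cap\mathbb{Z}^n$, where $F=[-\tfrac12,\tfrac12)^n$; that is, for every $x\in\mathbb{Z}^n$ there exist $N\ge0$ and $d_0,\dots,d_N\in D$ with $x=\sum_{j=0}^NA^jd_j$.
   Context: A dilation matrix is an $n\times n$ matrix with integer entries all of whose eigenvalues $\lambda$ satisfy $|\lambda|>1$. $D$ is a complete set of coset representatives of $\mathbb{Z}^n/A(\mathbb{Z}^n)$. A matrix $A$ yields a radix representation with digit set $D$ if for every $x_0\in\mathbb{Z}^n$ the Euclidean algorithm $x_j=Ax_{j+1}+r_j$ ($x_{j+1}\in\mathbb{Z}^n$, $r_j\in D$, uniquely determined) terminates, i.e. $x_j=r_j=\mathbf 0$ for all sufficiently large $j$; equivalently every $x\in\mathbb{Z}^n$ is a finite sum $\sum_{j=0}^N A^jd_j$ with $d_j\in D$. *)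

theory Defs
  imports "HOL-Analysis.Analysis"
begin

primrec matpow :: "'a::semiring_1 ^'n^'n \<Rightarrow> nat \<Rightarrow> 'a^'n^'n" where
  "matpow A 0 = mat 1"
| "matpow A (Suc k) = A ** matpow A k"

definition dilation_matrix :: "int^'n^'n \<Rightarrow> bool" where
  "dilation_matrix A \<longleftrightarrow>
     (\<forall>(lam::complex) (v::complex^'n). v \<noteq> 0 \<and> map_matrix of_int A *v v = lam *s v \<longrightarrow> cmod lam > 1)"

definition singular_values :: "real^'n^'n \<Rightarrow> real set" where
  "singular_values A =
     {sqrt lam | lam. \<exists>v::real^'n. v \<noteq> 0 \<and> (transpose A ** A) *v v = lam *s v}"

definition smallest_singular_value :: "real^'n^'n \<Rightarrow> real" where
  "smallest_singular_value A = Min (singular_values A)"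

definition real_vec :: "int^'n \<Rightarrow> real^'n" where
  "real_vec x = (\<chi> i. real_of_int (x $ i))"

definition half_cube_digits :: "int^'n^'n \<Rightarrow> (int^'n) set" where
  "half_cube_digits A =
     {d. \<exists>y::real^'n. (\<forall>i. -1/2 \<le> y $ i \<and> y $ i < 1/2) \<and> real_vec d = map_matrix real_of_int A *v y}"

definition complete_residue_system :: "int^'n^'n \<Rightarrow> (int^'n) set \<Rightarrow> bool" where
  "complete_residue_system A D \<longleftrightarrow>
     (\<forall>x::int^'n. \<exists>!d. d \<in> D \<and> (\<exists>y::int^'n. x = A *v y + d))"

definition radix_representation :: "int^'n^'n \<Rightarrow> (int^'n) set \<Rightarrow> bool" where
  "radix_representation A D \<longleftrightarrow> complete_residue_system A D \<and>
     (\<forall>x::int^'n. \<exists>(N::nat) (ds::nat \<Rightarrow> int^'n).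
        (\<forall>j\<le>N. ds j \<in> D) \<and> x = (\<Sum>j\<le>N. matpow A j *v ds j))"

end

theory Submission imports Defs begin

lemma inner_mat: "inner (B *v x) (B *v y) = inner x ((transpose B ** B) *v (y::real^'n))"
  for B :: "real^'n^'n"
proof -
  have "inner (B *v x) (B *v y) = inner (x v* transpose B) (B *v y)" by simp
  also have "\<dots> = inner x (transpose B *v (B *v y))" by (rule dot_lmul_matrix)
  finally show ?thesis by (simp add: matrix_vector_mul_assoc)
qed

lemma sym_inner: "inner ((transpose B ** B) *v x) y = inner x ((transpose B ** B) *v (y::real^'n))"
  for B :: "real^'n^'n"
  by (metis inner_commute inner_mat)

lemma eig_finite:
  fixes B :: "real^'n^'n"
  shows "finite {lam. \<exists>v::real^'n. v \<noteq> 0 \<and> (transpose B ** B) *v v = lam *s v}"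
proof -
  define M where "M = transpose B ** B"
  define E where "E = {lam. \<exists>v::real^'n. v \<noteq> 0 \<and> M *v v = lam *s v}"
  define ev where "ev lam = (SOME v. v \<noteq> 0 \<and> M *v v = lam *s v)" for lam
  have evp: "ev lam \<noteq> 0 \<and> M *v ev lam = lam *s ev lam" if "lam \<in> E" for lam
    using that unfolding E_def ev_def by (metis (mono_tags, lifting) mem_Collect_eq someI_ex)
  have orth: "inner (ev a) (ev b) = 0" if "a \<in> E" "b \<in> E" "a \<noteq> b" for a b
  proof -
    have "a * inner (ev a) (ev b) = inner (M *v ev a) (ev b)"
      using evp[OF that(1)] by (simp add: scalar_mult_eq_scaleR)
    also have "\<dots> = inner (ev a) (M *v ev b)" unfolding M_def by (rule sym_inner)
    also have "\<dots> = b * inner (ev a) (ev b)"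
      using evp[OF that(2)] by (simp add: scalar_mult_eq_scaleR)
    finally have "(a - b) * inner (ev a) (ev b) = 0" by (simp add: algebra_simps)
    thus ?thesis using that(3) by simp
  qed
  have inj: "inj_on ev E"
  proof
    fix a b assume ab: "a \<in> E" "b \<in> E" "ev a = ev b"
    show "a = b"
    proof (rule ccontr)
      assume "a \<noteq> b"
      hence "inner (ev a) (ev a) = 0" using orth[OF ab(1,2)] ab(3) by simp
      thus False using evp[OF ab(1)] by simp
    qed
  qed
  have "pairwise orthogonal (ev ` E)"
    unfolding pairwise_def orthogonal_def using orth by blast
  moreover have "0 \<notin> ev ` E" using evp by auto
  ultimately have "independent (ev ` E)" by (rule pairwise_orthogonal_independent)
  hence "finite (ev ` E)" using independent_bound by blast
  hence "finite E" using finite_imageD inj by blast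
  thus ?thesis unfolding E_def M_def .
qed

lemma sv_finite: "finite (singular_values B)"
proof -
  have "singular_values B = sqrt ` {lam. \<exists>v. v \<noteq> 0 \<and> (transpose B ** B) *v v = lam *s v}"
    unfolding singular_values_def by blast
  thus ?thesis using finite_imageI[OF eig_finite[of B], of sqrt] by simp
qed

lemma norm_add_sq: "(norm (a + t *\<^sub>R b))^2 = (norm a)^2 + 2*t*inner a b + t^2 * (norm b)^2"
  for a b :: "'a::real_inner"
  unfolding power2_norm_eq_inner
  by (simp add: inner_add_left inner_add_right inner_commute[of b a] power2_eq_square algebra_simps)

lemma mv_add: "B *v (a + t *s b) = B *v a + t *\<^sub>R (B *v b)" for B :: "real^'n^'n"
  by (simp add: matrix_vector_right_distrib scalar_mult_eq_scaleR[symmetric] vector_scalar_commute)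

lemma ring_aux: "(a + 2*t*b + t^2*c') - m*(p + 2*t*q + t^2*r) = a - m*p + 2*t*(b - m*q) + t^2*(c' - m*r)"
  for a b c' p q r m t :: real
  by (simp add: algebra_simps)

lemma norm_lower:
  fixes B :: "real^'n^'n"
  shows "smallest_singular_value B * norm x \<le> norm (B *v x)"
proof -
  define M where "M = transpose B ** B"
  define S where "S = sphere (0::real^'n) 1"
  define g where "g v = (norm (B *v v))^2" for v :: "real^'n"
  obtain b :: "real^'n" where b: "b \<in> Basis" using nonempty_Basis by blast
  have ne: "S \<noteq> {}" using b unfolding S_def by (auto intro!: exI[of _ b])
  have cp: "compact S" unfolding S_def by simp
  have ct: "continuous_on S g" unfolding g_def
    by (intro continuous_intros linear_continuous_on matrix_vector_mul_linear_gen)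
  obtain v0 where v0: "v0 \<in> S" "\<And>y. y \<in> S \<Longrightarrow> g v0 \<le> g y"
    using continuous_attains_inf[OF cp ne ct] by blast
  define m where "m = g v0"
  have nv0: "norm v0 = 1" using v0 unfolding S_def by simp
  have bound: "m * (norm v)^2 \<le> (norm (B *v v))^2" for v
  proof (cases "v = 0")
    case True thus ?thesis by simp
  next
    case False
    let ?u = "(1/norm v) *\<^sub>R v"
    have "?u \<in> S" using False unfolding S_def by simp
    hence "m \<le> g ?u" using v0 m_def by blast
    also have "g ?u = (norm (B *v v))^2 / (norm v)^2"
      unfolding g_def using False
      by (simp add: scalar_mult_eq_scaleR[symmetric] vector_scalar_commute)
        (simp add: scalar_mult_eq_scaleR power_mult_distrib power_divide)
    finally show ?thesis using False by (simp add: field_simps)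
  qed
  define u where "u = M *v v0 - m *s v0"
  define c where "c = (norm (B *v u))^2 - m * (norm u)^2"
  have quad: "0 \<le> 2 * t * inner u u + t^2 * c" for t
  proof -
    have "0 \<le> (norm (B *v (v0 + t *s u)))^2 - m * (norm (v0 + t *s u))^2"
      using bound[of "v0 + t *s u"] by simp
    also have "\<dots> = g v0 - m * (norm v0)^2 + 2 * t * (inner (B *v v0) (B *v u) - m * inner v0 u) + t^2 * c"
    proof -
      have e1: "(norm (B *v (v0 + t *s u)))^2 = (norm (B *v v0))^2 + 2*t*inner (B *v v0) (B *v u) + t^2*(norm (B *v u))^2"
        by (simp only: mv_add norm_add_sq)
      have e2: "(norm (v0 + t *s u))^2 = (norm v0)^2 + 2*t*inner v0 u + t^2*(norm u)^2"
        by (simp only: scalar_mult_eq_scaleR norm_add_sq)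
      show ?thesis unfolding e1 e2 g_def c_def by (rule ring_aux)
    qed
    also have "inner (B *v v0) (B *v u) - m * inner v0 u = inner u u"
    proof -
      have "inner (B *v v0) (B *v u) = inner (M *v v0) u" unfolding M_def inner_mat sym_inner ..
      moreover have "inner (M *v v0) u - m * inner v0 u = inner (M *v v0 - m *s v0) u"
        by (simp add: inner_diff_left scalar_mult_eq_scaleR)
      ultimately show ?thesis unfolding u_def[symmetric] by simp
    qed
    finally show ?thesis using nv0 m_def by simp
  qed
  have u0: "u = 0"
  proof (rule ccontr)
    assume "u \<noteq> 0"
    hence a: "inner u u > 0" by simp
    define s where "s = inner u u / (\<bar>c\<bar> + 1)"
    have s: "s > 0" using a by (simp add: s_def)
    have "0 \<le> 2 * (-s) * inner u u + (-s)^2 * c" by (rule quad)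
    hence "0 \<le> s * (s * c - 2 * inner u u)" by (simp add: power2_eq_square algebra_simps)
    hence "2 * inner u u \<le> s * c" using s by (simp add: zero_le_mult_iff)
    also have "s * c \<le> s * \<bar>c\<bar>" using s by (simp add: mult_left_mono)
    also have "s * \<bar>c\<bar> < inner u u"
      using a unfolding s_def by (simp add: field_simps)
    finally show False using a by simp
  qed
  have "v0 \<noteq> 0" using nv0 by auto
  moreover have "M *v v0 = m *s v0" using u0 u_def by simp
  ultimately have "sqrt m \<in> singular_values B" unfolding singular_values_def M_def by blast
  hence mu: "smallest_singular_value B \<le> sqrt m"
    unfolding smallest_singular_value_def using sv_finite[of B] by (rule Min_le[rotated])
  have m0: "m \<ge> 0" unfolding m_def g_def by simp
  have "sqrt m * norm x \<le> norm (B *v x)"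
    using real_sqrt_le_mono[OF bound[of x]] m0 by (simp add: real_sqrt_mult)
  moreover have "smallest_singular_value B * norm x \<le> sqrt m * norm x"
    using mu by (simp add: mult_right_mono)
  ultimately show ?thesis by linarith
qed


lemma rv_mult: "real_vec (A *v y) = map_matrix real_of_int A *v real_vec y"
  by (simp add: real_vec_def matrix_vector_mult_def vec_eq_iff)

lemma rv_add: "real_vec (x + y) = real_vec x + real_vec y"
  by (simp add: real_vec_def vec_eq_iff)

lemma rv_diff: "real_vec (x - y) = real_vec x - real_vec y"
  by (simp add: real_vec_def vec_eq_iff)

lemma rv_nth[simp]: "real_vec x $ i = real_of_int (x $ i)"
  by (simp add: real_vec_def)

lemma rv_norm: "(norm (real_vec x))^2 = real_of_int (\<Sum>i\<in>UNIV. (x$i)^2)"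
  unfolding power2_norm_eq_inner inner_vec_def by (simp add: power2_eq_square)

lemma inj_B:
  fixes B :: "real^'n^'n"
  assumes "smallest_singular_value B > 0"
  shows "inj ((*v) B)"
proof -
  have "x = 0" if "B *v x = 0" for x
    using norm_lower[of B x] that assms
    by (metis mult_le_0_iff norm_eq_zero norm_ge_zero norm_zero order_antisym_conv verit_comp_simplify1(3))
  thus ?thesis
    by (metis (no_types, lifting) eq_iff_diff_eq_0 injI matrix_vector_mult_diff_distrib)
qed

lemma surj_B:
  fixes B :: "real^'n^'n"
  assumes "smallest_singular_value B > 0"
  shows "\<exists>y. B *v y = x"
proof -
  have "surj ((*v) B)"
    by (rule linear_inj_imp_surj) (use inj_B[OF assms] in auto)
  thus ?thesis by (metis surjD)
qed

lemma half_norm: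
  fixes f :: "real^'n"
  assumes "\<forall>i. -1/2 \<le> f $ i \<and> f $ i < 1/2"
  shows "norm f \<le> sqrt (real CARD('n)) / 2"
proof -
  have "(norm f)^2 = (\<Sum>i\<in>UNIV. (f$i)^2)"
    unfolding power2_norm_eq_inner inner_vec_def by (simp add: power2_eq_square)
  also have "\<dots> \<le> (\<Sum>i\<in>(UNIV::'n set). 1/4)"
  proof (rule sum_mono)
    fix i
    have "\<bar>f$i\<bar> \<le> 1/2" using assms[rule_format, of i] unfolding abs_le_iff by linarith
    hence "\<bar>f$i\<bar>^2 \<le> (1/2)^2" by (rule power_mono) simp
    thus "(f$i)^2 \<le> 1/4" by (simp add: power2_eq_square)
  qed
  also have "\<dots> = (sqrt (real CARD('n)) / 2)^2" by (simp add: power_divide)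
  finally show ?thesis
    by (metis div_0 divide_nonneg_pos norm_ge_zero power2_le_imp_le real_sqrt_ge_zero
        zero_less_numeral of_nat_0_le_iff)
qed

lemma decomp:
  fixes A :: "int^'n^'n"
  assumes mu: "smallest_singular_value (map_matrix real_of_int A) > 0"
  shows "\<exists>z f. (\<forall>i. -1/2 \<le> f $ i \<and> f $ i < 1/2) \<and>
     real_vec x = map_matrix real_of_int A *v (real_vec z + f) \<and>
     smallest_singular_value (map_matrix real_of_int A) * norm (real_vec z + f) \<le> norm (real_vec x)"
proof -
  define B where "B = map_matrix real_of_int A"
  obtain y where y: "B *v y = real_vec x" using surj_B[OF mu] unfolding B_def by blast
  define z :: "int^'n" where "z = (\<chi> i. \<lfloor>y$i + 1/2\<rfloor>)"
  define f where "f = y - real_vec z"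
  have "-1/2 \<le> f $ i \<and> f $ i < 1/2" for i
    unfolding f_def z_def using floor_le_iff[of "y$i + 1/2"] le_floor_iff[of _ "y$i+1/2"]
    by (simp; linarith)
  moreover have "real_vec z + f = y" unfolding f_def by simp
  ultimately show ?thesis using y norm_lower[of B y] unfolding B_def by metis
qed

lemma digit_iff: "d \<in> half_cube_digits A \<longleftrightarrow>
  (\<exists>y::real^'n. (\<forall>i. -1/2 \<le> y $ i \<and> y $ i < 1/2) \<and> real_vec d = map_matrix real_of_int A *v y)"
  unfolding half_cube_digits_def by simp

lemma crs:
  fixes A :: "int^'n^'n"
  assumes mu: "smallest_singular_value (map_matrix real_of_int A) > 0"
  shows "complete_residue_system A (half_cube_digits A)"
  unfolding complete_residue_system_def
proof
  fix x :: "int^'n"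
  define B where "B = map_matrix real_of_int A"
  obtain z f where zf: "\<forall>i. -1/2 \<le> f $ i \<and> f $ i < 1/2" "real_vec x = B *v (real_vec z + f)"
    using decomp[OF mu, of x] unfolding B_def by blast
  define d where "d = x - A *v z"
  have "real_vec d = B *v f"
    unfolding d_def rv_diff rv_mult B_def[symmetric] zf(2) by (simp add: matrix_vector_right_distrib)
  hence dD: "d \<in> half_cube_digits A" unfolding digit_iff B_def[symmetric] using zf(1) by blast
  show "\<exists>!d. d \<in> half_cube_digits A \<and> (\<exists>y. x = A *v y + d)"
  proof (rule ex1I[of _ d])
    show "d \<in> half_cube_digits A \<and> (\<exists>y. x = A *v y + d)" using dD d_def by auto
  next
    fix d' assume d': "d' \<in> half_cube_digits A \<and> (\<exists>y. x = A *v y + d')"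
    then obtain y' where y': "x = A *v y' + d'" by blast
    obtain f' where f': "\<forall>i. -1/2 \<le> f' $ i \<and> f' $ i < 1/2" "real_vec d' = B *v f'"
      using d' unfolding digit_iff B_def by blast
    have "B *v (real_vec z + f) = B *v (real_vec y' + f')"
      using zf(2) y' f'(2) rv_add[of "A *v y'" d'] rv_mult[of A y']
      by (simp add: B_def matrix_vector_right_distrib)
    hence eq: "real_vec z + f = real_vec y' + f'" using inj_B[OF mu] unfolding B_def by (simp add: inj_eq)
    have "z $ i = y' $ i" for i
    proof -
      have "real_of_int (z$i - y'$i) = f'$i - f$i" using arg_cong[OF eq, of "\<lambda>v. v$i"] by simp
      moreover have "\<bar>f'$i - f$i\<bar> < 1" using zf(1)[rule_format, of i] f'(1)[rule_format, of i] by (simp add: abs_less_iff)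
      ultimately have "\<bar>z$i - y'$i\<bar> < 1" by (metis of_int_abs of_int_less_1_iff)
      thus ?thesis by simp
    qed
    hence "z = y'" by (simp add: vec_eq_iff)
    thus "d' = d" using y' unfolding d_def by simp
  qed
qed


lemma mv_sum_gen: "finite S \<Longrightarrow> A *v sum g S = (\<Sum>j\<in>S. A *v g j)"
  for A :: "int^'n^'n"
  by (induction S rule: finite_induct) (simp_all add: matrix_vector_right_distrib)

lemma mv_sum: "A *v (\<Sum>j\<le>N. matpow A j *v ds j) = (\<Sum>j\<le>N. matpow A (Suc j) *v ds j)"
  for A :: "int^'n^'n"
  by (simp add: mv_sum_gen matrix_vector_mul_assoc)

lemma repr:
  fixes A :: "int^'n^'n"
  assumes mu: "smallest_singular_value (map_matrix real_of_int A) > 2 * sqrt (real CARD('n))"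
  shows "\<exists>(N::nat) (ds::nat \<Rightarrow> int^'n).
        (\<forall>j\<le>N. ds j \<in> half_cube_digits A) \<and> x = (\<Sum>j\<le>N. matpow A j *v ds j)"
proof (induction "nat (\<Sum>i\<in>UNIV. (x$i)^2)" arbitrary: x rule: less_induct)
  case less
  define B where "B = map_matrix real_of_int A"
  define m where "m = smallest_singular_value B"
  have n1: "sqrt (real CARD('n)) \<ge> 1" by simp
  have m2: "m > 2 * sqrt (real CARD('n))" using mu unfolding m_def B_def .
  hence m0: "m > 0" using n1 by linarith
  obtain z f where zf: "\<forall>i. -1/2 \<le> f $ i \<and> f $ i < 1/2" "real_vec x = B *v (real_vec z + f)"
      "m * norm (real_vec z + f) \<le> norm (real_vec x)"
    using decomp[of A x] m0 unfolding B_def m_def by blast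
  define d where "d = x - A *v z"
  have "real_vec d = B *v f"
    unfolding d_def rv_diff rv_mult B_def[symmetric] zf(2) by (simp add: matrix_vector_right_distrib)
  hence dD: "d \<in> half_cube_digits A" unfolding digit_iff B_def[symmetric] using zf(1) by blast
  show ?case
  proof (cases "norm (real_vec x) < m / 2")
    case True
    obtain y where y: "B *v y = real_vec x" using surj_B[of B] m0 unfolding m_def by blast
    have "m * norm y \<le> norm (real_vec x)" using norm_lower[of B y] y unfolding m_def by simp
    hence "m * norm y < m * (1/2)" using True by simp
    hence ny: "norm y < 1/2" using m0 by simp
    have "\<forall>i. -1/2 \<le> y $ i \<and> y $ i < 1/2"
    proof
      fix i have "\<bar>y$i\<bar> < 1/2" using component_le_norm_cart[of y i] ny by linarith
      thus "-1/2 \<le> y $ i \<and> y $ i < 1/2" unfolding abs_less_iff by linarith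
    qed
    hence "x \<in> half_cube_digits A" unfolding digit_iff B_def[symmetric] using y by metis
    thus ?thesis by (intro exI[of _ 0] exI[of _ "\<lambda>_. x"]) simp
  next
    case False
    have nz: "norm (real_vec z) \<le> norm (real_vec z + f) + norm f"
      by (metis add_diff_cancel_right' norm_triangle_ineq4)
    have nf: "norm f \<le> sqrt (real CARD('n)) / 2" by (rule half_norm[OF zf(1)])
    have "m * norm (real_vec z + f) \<le> norm (real_vec x)" by (rule zf(3))
    hence "norm (real_vec z + f) \<le> norm (real_vec x) / m" using m0 by (simp add: field_simps)
    also have "\<dots> < norm (real_vec x) / 2"
    proof (rule divide_strict_left_mono)
      show "2 < m" using m2 n1 by linarith
      show "0 < norm (real_vec x)" using False m0 by linarith
      show "0 < m * 2" using m0 by simp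
    qed
    finally have "norm (real_vec z) < norm (real_vec x)" using nz nf False m2 by linarith
    hence "(norm (real_vec z))^2 < (norm (real_vec x))^2"
      by (simp add: power_strict_mono)
    hence "(\<Sum>i\<in>UNIV. (z$i)^2) < (\<Sum>i\<in>UNIV. (x$i)^2)" unfolding rv_norm of_int_less_iff .
    moreover have "0 \<le> (\<Sum>i\<in>UNIV. (z$i)^2)" by (simp add: sum_nonneg)
    ultimately have "nat (\<Sum>i\<in>UNIV. (z$i)^2) < nat (\<Sum>i\<in>UNIV. (x$i)^2)" by simp
    then obtain N ds where IH: "\<forall>j\<le>N. ds j \<in> half_cube_digits A" "z = (\<Sum>j\<le>N. matpow A j *v ds j)"
      using less by blast
    define ds' where "ds' j = (case j of 0 \<Rightarrow> d | Suc k \<Rightarrow> ds k)" for j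
    have "\<forall>j\<le>Suc N. ds' j \<in> half_cube_digits A"
      using IH(1) dD by (auto simp: ds'_def split: nat.split)
    moreover have "x = (\<Sum>j\<le>Suc N. matpow A j *v ds' j)"
      unfolding sum.atMost_Suc_shift ds'_def
      using d_def IH(2) mv_sum[where A=A and N=N and ds=ds] by (simp add: algebra_simps)
    ultimately show ?thesis by blast
  qed
qed

theorem mainTheorem6:
  fixes A :: "int^'n^'n"
  assumes "dilation_matrix A"
    and "smallest_singular_value (map_matrix real_of_int A) > 2 * sqrt (real CARD('n))"
  shows "radix_representation A (half_cube_digits A)"
proof -
  have "smallest_singular_value (map_matrix real_of_int A) > 0"
    using assms(2) real_sqrt_ge_zero[of "real CARD('n)"] by linarith
  thus ?thesis unfolding radix_representation_def using crs repr[OF assms(2)] by blast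
qed

end
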